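(* Let $R$ be a finite commutative unital ring, $N\ge2$ with $N\in R^{\times}$, and $q\in R$ a root of the $N$-th cyclotomic polynomial over $\mathbb{Z}$. Let $\alpha$ be the exponent of $R^{\times}$ and $k$ the integer with $\alpha=kN$. Let $u,u'\in R^{\times}$, $a,a'\in R$. If $\mathrm{Id}_{H_N^q}(\mathcal{B}_{(u,a)})=\mathrm{Id}_{H_N^q}(\mathcal{B}_{(u',a')})$, then $(u')^k=u^k$.
   Context: $N$ divides $\alpha$ under these hypotheses. $H_N^q$ is the Taft Hopf algebra over $R$: generated by $g,x$ with $g^N=1$, $x^N=0$, $xg=qgx$, $\Delta(g)=g\otimes g$, $\Delta(x)=1\otimes x+x\otimes g$, $\varepsilon(g)=1$, $\varepsilon(x)=0$, free over $R$ with basis $\{g^mx^n:0\le m,n<N\}$. For $u\in R^{\times},a\in R$, $\mathcal{B}_{(u,a)}$ is the $R$-algebra generated by $v_g,v_x$ with $v_g^N=u$, $v_x^N=a$, $v_xv_g=qv_gv_x$, a right $H_N^q$-comodule algebra via $v_g\mapsto v_g\otimes g$, $v_x\mapsto1\otimes x+v_x\otimes g$. Let $Z_i^H$ ($i\ge1$) be copies $\{Z_i^h:h\in H_N^q\}$ of the $R$-module $H_N^q$ and $T=T(\bigoplus_iZ_i^H)$ the tensor algebra with coaction $\delta(Z_i^h)=\sum Z_i^{h_1}\otimes h_2$. $P\in T$ is a polynomial $H_N^q$-identity for a right $H_N^q$-comodule algebra $B$ if $f(P)=0$ for all right $H_N^q$-comodule algebra maps $f:T\to B$; $\mathrm{Id}_{H_N^q}(B)$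 is the set of these. *)

theory Defs
  imports Complex_Main "HOL-Computational_Algebra.Polynomial"
begin

definition cyclotomic :: "nat \<Rightarrow> int poly" where
  "cyclotomic n = (THE p. map_poly (of_int :: int \<Rightarrow> complex) p =
     (\<Prod>k\<in>{k. k < n \<and> coprime k n}. [:- cis (2 * pi * real k / real n), 1:]))"

definition unit_exponent :: "'a::{comm_ring_1,finite} itself \<Rightarrow> nat" where
  "unit_exponent _ = (LEAST e. 0 < e \<and> (\<forall>x::'a. x dvd 1 \<longrightarrow> x ^ e = 1))"

text \<open>An element of a free R-module with basis indexed by pairs (m,n) in Idx N is a
function (nat*nat) => R vanishing outside Idx N.\<close>

definition Idx :: "nat \<Rightarrow> (nat \<times> nat) set" where
  "Idx N = {..<N} \<times> {..<N}"

definition bas :: "'i \<Rightarrow> 'i \<Rightarrow> 'a::comm_ring_1" where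
  "bas i = (\<lambda>k. if k = i then 1 else 0)"

text \<open>Structure constants of B_(u,a) in the basis v_g^m v_x^n:
 (v_g^m v_x^n)(v_g^m' v_x^n') = q^(n m') u^((m+m') div N) a^((n+n') div N)
   v_g^((m+m') mod N) v_x^((n+n') mod N).
 The Taft algebra H_N^q is the case u = 1, a = 0 (g = v_g, x = v_x).\<close>

definition bconst :: "nat \<Rightarrow> 'a::comm_ring_1 \<Rightarrow> 'a \<Rightarrow> 'a \<Rightarrow>
    nat \<times> nat \<Rightarrow> nat \<times> nat \<Rightarrow> nat \<times> nat \<Rightarrow> 'a" where
  "bconst N q u a i j k = (case i of (m, n) \<Rightarrow> case j of (m', n') \<Rightarrow>
     if k = ((m + m') mod N, (n + n') mod N)
     then q ^ (n * m') * u ^ ((m + m') div N) * a ^ ((n + n') div N) else 0)"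

definition algmul :: "nat \<Rightarrow> (nat \<times> nat \<Rightarrow> nat \<times> nat \<Rightarrow> nat \<times> nat \<Rightarrow> 'a::comm_ring_1) \<Rightarrow>
    (nat \<times> nat \<Rightarrow> 'a) \<Rightarrow> (nat \<times> nat \<Rightarrow> 'a) \<Rightarrow> (nat \<times> nat \<Rightarrow> 'a)" where
  "algmul N c x y = (\<lambda>k. \<Sum>i\<in>Idx N. \<Sum>j\<in>Idx N. x i * y j * c i j k)"

text \<open>Tensor product of two such algebras (basis: pairs of basis indices).\<close>

definition tmul :: "nat \<Rightarrow> (nat \<times> nat \<Rightarrow> nat \<times> nat \<Rightarrow> nat \<times> nat \<Rightarrow> 'a::comm_ring_1) \<Rightarrow>
    (nat \<times> nat \<Rightarrow> nat \<times> nat \<Rightarrow> nat \<times> nat \<Rightarrow> 'a) \<Rightarrow>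
    ((nat \<times> nat) \<times> (nat \<times> nat) \<Rightarrow> 'a) \<Rightarrow> ((nat \<times> nat) \<times> (nat \<times> nat) \<Rightarrow> 'a) \<Rightarrow>
    ((nat \<times> nat) \<times> (nat \<times> nat) \<Rightarrow> 'a)" where
  "tmul N c1 c2 X Y = (\<lambda>(k, l). \<Sum>p\<in>Idx N \<times> Idx N. \<Sum>p'\<in>Idx N \<times> Idx N.
      X p * Y p' * c1 (fst p) (fst p') k * c2 (snd p) (snd p') l)"

text \<open>Image of the basis element v_g^m v_x^n under the algebra map determined by
 v_g |-> v_g (x) g and v_x |-> 1 (x) x + v_x (x) g, computed in B (x) H as
 (v_g (x) g)^m (1 (x) x + v_x (x) g)^n.  For c = structure constants of H this is the
 comultiplication Delta(g^m x^n) = Delta(g)^m Delta(x)^n.\<close>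

definition gen_coact :: "nat \<Rightarrow> 'a::comm_ring_1 \<Rightarrow>
    (nat \<times> nat \<Rightarrow> nat \<times> nat \<Rightarrow> nat \<times> nat \<Rightarrow> 'a) \<Rightarrow>
    nat \<times> nat \<Rightarrow> ((nat \<times> nat) \<times> (nat \<times> nat) \<Rightarrow> 'a)" where
  "gen_coact N q c i =
    (let mu = tmul N c (bconst N q 1 0);
         one = bas ((0, 0), (0, 0));
         G = bas ((1, 0), (1, 0));
         X = (\<lambda>p. bas ((0, 0), (0, 1)) p + bas ((0, 1), (1, 0)) p)
     in mu ((mu G ^^ fst i) one) ((mu X ^^ snd i) one))"

definition taft_Delta :: "nat \<Rightarrow> 'a::comm_ring_1 \<Rightarrow> nat \<times> nat \<Rightarrow>
    ((nat \<times> nat) \<times> (nat \<times> nat) \<Rightarrow> 'a)" where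
  "taft_Delta N q i = gen_coact N q (bconst N q 1 0) i"

definition B_coact :: "nat \<Rightarrow> 'a::comm_ring_1 \<Rightarrow> 'a \<Rightarrow> 'a \<Rightarrow> (nat \<times> nat \<Rightarrow> 'a) \<Rightarrow>
    ((nat \<times> nat) \<times> (nat \<times> nat) \<Rightarrow> 'a)" where
  "B_coact N q u a y = (\<lambda>p. \<Sum>i\<in>Idx N. y i * gen_coact N q (bconst N q u a) i p)"

text \<open>An R-linear map psi : H_N^q -> B_(u,a), given by its values psi i on the basis
 elements g^m x^n (i = (m,n)), is a right H-comodule map iff
 delta_B (psi h) = (psi (x) id) (Delta h) for all basis elements h.\<close>

definition comod_map :: "nat \<Rightarrow> 'a::comm_ring_1 \<Rightarrow> 'a \<Rightarrow> 'a \<Rightarrow>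
    (nat \<times> nat \<Rightarrow> nat \<times> nat \<Rightarrow> 'a) \<Rightarrow> bool" where
  "comod_map N q u a psi \<longleftrightarrow>
     (\<forall>j k. k \<notin> Idx N \<longrightarrow> psi j k = 0) \<and>
     (\<forall>i\<in>Idx N. B_coact N q u a (psi i) =
        (\<lambda>(k, l). \<Sum>j\<in>Idx N. taft_Delta N q i (j, l) * psi j k))"

text \<open>T is the free R-algebra on the letters Z_i^{b} (i >= 1, b a basis index of H);
 an element is a finitely supported function from words to R.\<close>

definition T_carrier :: "nat \<Rightarrow> ((nat \<times> (nat \<times> nat)) list \<Rightarrow> 'a::comm_ring_1) set" where
  "T_carrier N = {P. finite {w. P w \<noteq> 0} \<and>
      (\<forall>w. P w \<noteq> 0 \<longrightarrow> (\<forall>z\<in>set w. 1 \<le> fst z \<and> snd z \<in> Idx N))}"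

definition word_val :: "nat \<Rightarrow> (nat \<times> nat \<Rightarrow> nat \<times> nat \<Rightarrow> nat \<times> nat \<Rightarrow> 'a::comm_ring_1) \<Rightarrow>
    (nat \<Rightarrow> nat \<times> nat \<Rightarrow> nat \<times> nat \<Rightarrow> 'a) \<Rightarrow> (nat \<times> (nat \<times> nat)) list \<Rightarrow> (nat \<times> nat \<Rightarrow> 'a)" where
  "word_val N c phi w = foldr (\<lambda>z acc. algmul N c (phi (fst z) (snd z)) acc) w (bas (0, 0))"

definition T_eval :: "nat \<Rightarrow> (nat \<times> nat \<Rightarrow> nat \<times> nat \<Rightarrow> nat \<times> nat \<Rightarrow> 'a::comm_ring_1) \<Rightarrow>
    (nat \<Rightarrow> nat \<times> nat \<Rightarrow> nat \<times> nat \<Rightarrow> 'a) \<Rightarrow> ((nat \<times> (nat \<times> nat)) list \<Rightarrow> 'a) \<Rightarrow> (nat \<times> nat \<Rightarrow> 'a)" where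
  "T_eval N c phi P = (\<lambda>k. \<Sum>w\<in>{w. P w \<noteq> 0}. P w * word_val N c phi w k)"

text \<open>Comodule algebra maps f : T -> B_(u,a) correspond exactly to families
 (phi i)_{i>=1} of comodule maps H -> B_(u,a), via f(Z_i^h) = phi_i(h).\<close>

definition taft_Id :: "nat \<Rightarrow> 'a::comm_ring_1 \<Rightarrow> 'a \<Rightarrow> 'a \<Rightarrow>
    ((nat \<times> (nat \<times> nat)) list \<Rightarrow> 'a) set" where
  "taft_Id N q u a = {P \<in> T_carrier N. \<forall>phi. (\<forall>i. comod_map N q u a (phi i)) \<longrightarrow>
      T_eval N (bconst N q u a) phi P = (\<lambda>_. 0)}"

end

theory Submission
  imports Defs "HOL-Computational_Algebra.Fundamental_Theorem_Algebra"
begin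

lemma xn1_prod:
  assumes n: "n > 0"
  shows "([:0,1:]^n - 1 :: complex poly) = (\<Prod>k<n. [:- cis(2*pi*real k/real n), 1:])"
proof -
  define p where "p = ([:0,1:]^n - 1 :: complex poly)"
  have pa: "poly p a = a^n - 1" for a by (simp add: p_def)
  have deg: "degree p = n"
  proof -
    have "p = [:0,1:]^n + (-1)" by (simp add: p_def)
    also have "degree \<dots> = degree ([:0,1:]^n :: complex poly)"
      using n by (intro degree_add_eq_left) (simp add: degree_linear_power)
    finally show ?thesis by (simp add: degree_linear_power)
  qed
  have lc: "lead_coeff p = 1"
  proof -
    have "lead_coeff p = coeff ([:0,1:]^n :: complex poly) n - coeff 1 n"
      using deg by (simp add: p_def)
    also have "coeff ([:0,1:]^n :: complex poly) n = 1"
      by (metis coeff_linear_power)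
    finally show ?thesis using n by simp
  qed
  have dp: "pderiv p = smult (of_nat n) ([:0,1:]^(n-1))"
    using n unfolding p_def
    by (cases n) (simp_all del: power_Suc add: pderiv_diff pderiv_power_Suc pderiv_pCons)
  have rsq: "rsquarefree p"
    unfolding rsquarefree_roots
  proof (intro allI notI)
    fix a assume "poly p a = 0 \<and> poly (pderiv p) a = 0"
    hence h1: "a^n = 1" and h2: "of_nat n * a^(n-1) = 0" by (auto simp: pa dp)
    have "a \<noteq> 0" using h1 n by (auto simp: power_0_left)
    thus False using h2 n by simp
  qed
  have "p = smult (lead_coeff p) (\<Prod>z|poly p z = 0. [:-z, 1:])"
    by (rule complex_poly_decompose_rsquarefree[OF rsq, symmetric])
  also have "\<dots> = (\<Prod>z\<in>{z. z^n = 1}. [:-z, 1:])" using lc by (simp add: pa)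
  also have "\<dots> = (\<Prod>k<n. [:- cis(2*pi*real k/real n), 1:])"
    by (rule prod.reindex_bij_betw[OF bij_betw_roots_unity[OF n], symmetric])
  finally show ?thesis by (simp add: p_def)
qed

definition Pc :: "nat \<Rightarrow> complex poly" where
  "Pc d = (\<Prod>k\<in>{k. k < d \<and> coprime k d}. [:- cis (2 * pi * real k / real d), 1:])"

lemma group_prod:
  fixes n :: nat and f :: "complex \<Rightarrow> complex poly"
  assumes n: "n > 0"
  shows "(\<Prod>k<n. f (cis(2*pi*real k/real n))) =
         (\<Prod>d\<in>{d. d dvd n}. \<Prod>k\<in>{k. k < d \<and> coprime k d}. f (cis (2 * pi * real k / real d)))"
proof -
  have "(\<Prod>d\<in>{d. d dvd n}. \<Prod>k\<in>{k. k < d \<and> coprime k d}. f (cis (2 * pi * real k / real d)))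
     = (\<Prod>p\<in>Sigma {d. d dvd n} (\<lambda>d. {k. k < d \<and> coprime k d}). f (cis (2 * pi * real (snd p) / real (fst p))))"
    using n by (subst prod.Sigma) (auto simp: case_prod_beta')
  also have "\<dots> = (\<Prod>k<n. f (cis(2*pi*real k/real n)))"
  proof (rule prod.reindex_bij_witness[where i = "\<lambda>k. (n div gcd k n, k div gcd k n)"
        and j = "\<lambda>p. snd p * (n div fst p)"])
    fix p assume p: "p \<in> Sigma {d. d dvd n} (\<lambda>d. {k. k < d \<and> coprime k d})"
    obtain d j where pdj: "p = (d, j)" by (cases p)
    from p pdj have d: "d dvd n" and j: "j < d" and cop: "coprime j d" by auto
    obtain e where e: "n = d * e" using d by blast
    have dpos: "d > 0" and epos: "e > 0" using n e by auto
    have nde: "n div d = e" using e dpos by simp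
    have nee: "n div e = d" using e epos by simp
    have g: "gcd (j * e) n = e"
    proof -
      have "gcd (j * e) n = gcd (e * j) (e * d)" using e by (simp add: mult.commute)
      also have "\<dots> = e * gcd j d" by (rule gcd_mult_distrib_nat[symmetric])
      finally show ?thesis using cop by (simp add: coprime_iff_gcd_eq_1)
    qed
    show "(n div gcd (snd p * (n div fst p)) n, snd p * (n div fst p) div gcd (snd p * (n div fst p)) n) = p"
      using pdj nde nee g epos by simp
    show "snd p * (n div fst p) \<in> {..<n}"
      using pdj nde j epos e by (simp del: of_nat_mult)
    have "2 * pi * real (j * e) / real n = 2 * pi * real j / real d" using e epos dpos by (simp add: field_simps)
    thus "f (cis (2 * pi * real (snd p * (n div fst p)) / real n)) = f (cis (2 * pi * real (snd p) / real (fst p)))"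
      using pdj nde by (simp only: fst_conv snd_conv)
  next
    fix k assume k: "k \<in> {..<n}"
    define g where "g = gcd k n"
    have gpos: "g > 0" using n by (simp add: g_def)
    have gk: "g dvd k" and gn: "g dvd n" by (auto simp: g_def)
    obtain m where m: "n = g * m" using gn by blast
    obtain j where jj: "k = g * j" using gk by blast
    have mpos: "m > 0" using m n by auto
    have f1: "gcd k n = g" by (simp add: g_def)
    have f2: "k div g = j" "n div g = m" "n div m = g" using m jj gpos mpos by auto
    show "snd (n div gcd k n, k div gcd k n) * (n div fst (n div gcd k n, k div gcd k n)) = k"
      unfolding f1 f2 fst_conv snd_conv using jj by simp
    have "k div g < n div g" using m jj gpos k by simp
    moreover have "coprime (k div g) (n div g)"
      unfolding g_def using n by (intro div_gcd_coprime) auto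
    ultimately show "(n div gcd k n, k div gcd k n) \<in> Sigma {d. d dvd n} (\<lambda>d. {k. k < d \<and> coprime k d})"
      unfolding f1 f2 using m by auto
  qed
  finally show ?thesis by simp
qed

lemma xn1_Pc:
  assumes n: "n > 0"
  shows "([:0,1:]^n - 1 :: complex poly) = (\<Prod>d\<in>{d. d dvd n}. Pc d)"
  unfolding xn1_prod[OF n] Pc_def
  using group_prod[OF n, of "\<lambda>z. [:-z,1:]"] by simp

lemma mpi_add: "map_poly (of_int :: int \<Rightarrow> 'b::comm_ring_1) (p + q) = map_poly of_int p + map_poly of_int q"
  by (rule poly_eqI) (simp add: coeff_map_poly)
lemma mpi_diff: "map_poly (of_int :: int \<Rightarrow> 'b::comm_ring_1) (p - q) = map_poly of_int p - map_poly of_int q"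
  by (rule poly_eqI) (simp add: coeff_map_poly)
lemma mpi_mult: "map_poly (of_int :: int \<Rightarrow> 'b::comm_ring_1) (p * q) = map_poly of_int p * map_poly of_int q"
  by (rule poly_eqI) (simp add: coeff_map_poly coeff_mult of_int_sum)
lemma mpi_1: "map_poly (of_int :: int \<Rightarrow> 'b::comm_ring_1) 1 = 1"
  by simp
lemma mpi_X: "map_poly (of_int :: int \<Rightarrow> 'b::comm_ring_1) [:0,1:] = [:0,1:]"
  by (simp add: map_poly_pCons)
lemma mpi_power: "map_poly (of_int :: int \<Rightarrow> 'b::comm_ring_1) (p ^ n) = map_poly of_int p ^ n"
  by (induction n) (simp_all add: mpi_mult)
lemma mpi_prod: "map_poly (of_int :: int \<Rightarrow> 'b::comm_ring_1) (prod f A) = (\<Prod>x\<in>A. map_poly of_int (f x))"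
  by (induction A rule: infinite_finite_induct) (simp_all add: mpi_mult)
lemma mpi_sum: "map_poly (of_int :: int \<Rightarrow> 'b::comm_ring_1) (sum f A) = (\<Sum>x\<in>A. map_poly of_int (f x))"
  by (induction A rule: infinite_finite_induct) (simp_all add: mpi_add)

lemma mpi_inj:
  assumes "map_poly (of_int :: int \<Rightarrow> 'b::{comm_ring_1,ring_char_0}) p = map_poly of_int q"
  shows "p = q"
proof (rule poly_eqI)
  fix n
  have "coeff (map_poly (of_int :: int \<Rightarrow> 'b) p) n = coeff (map_poly of_int q) n" using assms by simp
  thus "coeff p n = coeff q n" by (simp add: coeff_map_poly)
qed

lemma mpi_degree: "degree (map_poly (of_int :: int \<Rightarrow> 'b::{comm_ring_1,ring_char_0}) p) = degree p"
  by (rule degree_map_poly) simp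

lemma mpi_lead: "lead_coeff (map_poly (of_int :: int \<Rightarrow> 'b::{comm_ring_1,ring_char_0}) p) = of_int (lead_coeff p)"
  by (simp add: mpi_degree coeff_map_poly)

lemma div_lemma:
  fixes A B :: "int poly" and C :: "complex poly"
  assumes B: "lead_coeff B = 1" and eq: "map_poly of_int A = map_poly of_int B * C"
  shows "\<exists>c. map_poly of_int c = C"
proof -
  have B0: "B \<noteq> 0" using B by auto
  obtain Q R where QR: "pseudo_divmod A B = (Q, R)" by (cases "pseudo_divmod A B")
  have e1: "A = B * Q + R" using pseudo_divmod(1)[OF B0 QR] B by simp
  have e2: "R = 0 \<or> degree R < degree B" using pseudo_divmod(2)[OF B0 QR] .
  let ?m = "map_poly (of_int :: int \<Rightarrow> complex)"
  have "?m B * C = ?m B * ?m Q + ?m R" using eq e1 by (simp add: mpi_add mpi_mult)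
  hence e3: "?m B * (C - ?m Q) = ?m R" by (simp add: algebra_simps)
  have mB0: "?m B \<noteq> 0" using B0 by (metis map_poly_0 mpi_inj)
  show ?thesis
  proof (cases "C = ?m Q")
    case True thus ?thesis by blast
  next
    case False
    hence "?m B * (C - ?m Q) \<noteq> 0" using mB0 by simp
    hence R0: "R \<noteq> 0" using e3 by auto
    have "degree (?m B * (C - ?m Q)) = degree B + degree (C - ?m Q)"
      using mB0 False by (simp add: degree_mult_eq mpi_degree)
    hence "degree (?m R) \<ge> degree B" using e3 by simp
    thus ?thesis using e2 R0 by (simp add: mpi_degree)
  qed
qed

lemma lead_Pc: "lead_coeff (Pc n) = 1"
  unfolding Pc_def lead_coeff_prod by simp

lemma Pc_int: "n > 0 \<Longrightarrow> \<exists>p. map_poly of_int p = Pc n \<and> lead_coeff p = 1"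
proof (induction n rule: less_induct)
  case (less n)
  define D where "D = {d. d dvd n \<and> d \<noteq> n}"
  have finD: "finite D"
    by (rule finite_subset[of D "{d. d dvd n}"]) (auto simp: D_def less.prems)
  have "\<forall>d\<in>D. \<exists>p. map_poly of_int p = Pc d \<and> lead_coeff p = 1"
  proof
    fix d assume "d \<in> D"
    hence dd: "d dvd n" "d \<noteq> n" unfolding D_def by auto
    have "d \<le> n" using dd(1) less.prems by (rule dvd_imp_le)
    hence "d < n" using dd(2) by simp
    moreover have "d > 0" using dd(1) less.prems by (cases "d = 0") auto
    ultimately show "\<exists>p. map_poly of_int p = Pc d \<and> lead_coeff p = 1" using less.IH by blast
  qed
  then obtain pp where pp: "\<And>d. d \<in> D \<Longrightarrow> map_poly of_int (pp d) = Pc d \<and> lead_coeff (pp d) = 1"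
    by metis
  define B where "B = (\<Prod>d\<in>D. pp d)"
  have lB: "lead_coeff B = 1" unfolding B_def lead_coeff_prod using pp by simp
  have mB: "map_poly of_int B = (\<Prod>d\<in>D. Pc d)" unfolding B_def mpi_prod using pp
    by (intro prod.cong) auto
  have dv: "{d. d dvd n} = insert n D" unfolding D_def by auto
  have "map_poly of_int ([:0,1:]^n - 1 :: int poly) = ([:0,1:]^n - 1 :: complex poly)"
    by (simp add: mpi_diff mpi_power mpi_X)
  also have "\<dots> = (\<Prod>d\<in>{d. d dvd n}. Pc d)" by (rule xn1_Pc[OF less.prems])
  also have "\<dots> = map_poly of_int B * Pc n" unfolding dv mB using finD
    by (subst prod.insert) (auto simp: D_def mult.commute)
  finally obtain c where c: "map_poly of_int c = Pc n" using div_lemma[OF lB] by blast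
  have "of_int (lead_coeff c) = (1::complex)" using mpi_lead[of c, where 'b=complex] c lead_Pc[of n] by simp
  hence "lead_coeff c = 1" by (metis of_int_1 of_int_eq_iff)
  thus ?case using c by blast
qed

lemma cyclotomic_map: "n > 0 \<Longrightarrow> map_poly of_int (cyclotomic n) = Pc n"
proof -
  assume n: "n > 0"
  obtain p where p: "map_poly of_int p = Pc n" using Pc_int[OF n] by blast
  have "\<exists>!p. map_poly (of_int :: int \<Rightarrow> complex) p = Pc n"
  proof (rule ex1I[of _ p])
    show "map_poly of_int p = Pc n" by (rule p)
    fix p' assume "map_poly (of_int :: int \<Rightarrow> complex) p' = Pc n"
    hence "map_poly (of_int :: int \<Rightarrow> complex) p' = map_poly of_int p" using p by simp
    thus "p' = p" by (rule mpi_inj)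
  qed
  hence "map_poly (of_int :: int \<Rightarrow> complex) (cyclotomic n) = Pc n"
    unfolding cyclotomic_def Pc_def[symmetric] by (rule theI')
  thus ?thesis .
qed

lemma xn1_cyc:
  assumes n: "n > 0"
  shows "([:0,1:]^n - 1 :: int poly) = (\<Prod>d\<in>{d. d dvd n}. cyclotomic d)"
proof (rule mpi_inj[where 'b = complex])
  have "map_poly (of_int :: int \<Rightarrow> complex) (\<Prod>d\<in>{d. d dvd n}. cyclotomic d) = (\<Prod>d\<in>{d. d dvd n}. Pc d)"
    unfolding mpi_prod
  proof (intro prod.cong refl)
    fix d assume "d \<in> {d. d dvd n}"
    hence "d > 0" using n by (cases "d = 0") auto
    thus "map_poly of_int (cyclotomic d) = Pc d" by (rule cyclotomic_map)
  qed
  thus "map_poly (of_int :: int \<Rightarrow> complex) ([:0,1:]^n - 1) = map_poly of_int (\<Prod>d\<in>{d. d dvd n}. cyclotomic d)"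
    using xn1_Pc[OF n] by (simp add: mpi_diff mpi_power mpi_X)
qed

lemma cyc_root_pow:
  assumes N: "N > 0" and root: "poly (map_poly of_int (cyclotomic N)) (q::'a::comm_ring_1) = 0"
  shows "q ^ N = 1"
proof -
  have "([:0,1:]^N - 1 :: int poly) = cyclotomic N * (\<Prod>e\<in>{e. e dvd N} - {N}. cyclotomic e)"
    unfolding xn1_cyc[OF N]
    by (subst prod.remove[of _ N]) (auto simp: N)
  hence "poly (map_poly (of_int :: int \<Rightarrow> 'a) ([:0,1:]^N - 1)) q
       = poly (map_poly of_int (cyclotomic N * (\<Prod>e\<in>{e. e dvd N} - {N}. cyclotomic e))) q" by simp
  thus ?thesis using root by (simp add: mpi_diff mpi_power mpi_X mpi_mult)
qed

lemma cyc_root_proper: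
  assumes N: "N > 0" and root: "poly (map_poly of_int (cyclotomic N)) (q::'a::comm_ring_1) = 0"
    and Nu: "of_nat N dvd (1::'a)"
    and d: "d dvd N" "0 < d" "d < N" and qd: "q ^ d = 1"
  shows "(0::'a) = 1"
proof -
  obtain m where m: "N = d * m" using d by blast
  define H where "H = (\<Prod>e\<in>{e. e dvd N} - {e. e dvd d} - {N}. cyclotomic e)"
  have fin: "finite {e. e dvd N}" using N by simp
  have sub: "{e. e dvd d} \<subseteq> {e. e dvd N}" using d by auto
  have Nnot: "N \<notin> {e. e dvd d}" using d by (auto dest: dvd_imp_le)
  have "(\<Prod>e\<in>{e. e dvd N}. cyclotomic e) = (\<Prod>e\<in>{e. e dvd d}. cyclotomic e) * (\<Prod>e\<in>{e. e dvd N} - {e. e dvd d}. cyclotomic e)"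
    using prod.subset_diff[OF sub fin] by (simp add: mult.commute)
  also have "(\<Prod>e\<in>{e. e dvd N} - {e. e dvd d}. cyclotomic e) = cyclotomic N * H"
    unfolding H_def using fin Nnot
    by (subst prod.remove[of _ N]) auto
  finally have e1: "([:0,1:]^N - 1 :: int poly) = ([:0,1:]^d - 1) * (cyclotomic N * H)"
    using xn1_cyc[OF N] xn1_cyc[of d] d by simp
  define S where "S = (\<Sum>i<m. ([:0,1:]^d :: int poly) ^ i)"
  have e2: "([:0,1:]^N - 1 :: int poly) = ([:0,1:]^d - 1) * S"
    unfolding S_def m power_mult by (rule power_diff_1_eq)
  have nz: "([:0,1:]^d - 1 :: int poly) \<noteq> 0"
  proof
    assume "([:0,1:]^d - 1 :: int poly) = 0"
    hence "poly ([:0,1:]^d - 1 :: int poly) 0 = 0" by simp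
    thus False using d by (simp add: power_0_left)
  qed
  have e3: "cyclotomic N * H = S" using e1 e2 nz by simp
  have "poly (map_poly (of_int :: int \<Rightarrow> 'a) (cyclotomic N * H)) q = poly (map_poly of_int S) q"
    using e3 by simp
  hence "(0::'a) = (\<Sum>i<m. (q ^ d) ^ i)"
    using root by (simp add: mpi_mult S_def mpi_sum mpi_power mpi_X poly_sum)
  hence m0: "(of_nat m :: 'a) = 0" using qd by simp
  have "(of_nat N :: 'a) = 0" unfolding m using m0 by simp
  thus ?thesis using Nu by simp
qed

lemma pigeon_pow:
  fixes x :: "'a::{comm_ring_1,finite}"
  shows "\<exists>i j. i < j \<and> j \<le> card (UNIV::'a set) \<and> x ^ i = x ^ j"
proof -
  have "\<not> inj_on (\<lambda>i. x ^ i) {0..card (UNIV::'a set)}"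
  proof
    assume "inj_on (\<lambda>i. x ^ i) {0..card (UNIV::'a set)}"
    hence "card ((\<lambda>i. x ^ i) ` {0..card (UNIV::'a set)}) = card {0..card (UNIV::'a set)}" by (rule card_image)
    moreover have "card ((\<lambda>i. x ^ i) ` {0..card (UNIV::'a set)}) \<le> card (UNIV::'a set)" by (rule card_mono) auto
    ultimately show False by simp
  qed
  then obtain i j where ij: "i \<in> {0..card (UNIV::'a set)}" "j \<in> {0..card (UNIV::'a set)}" "i \<noteq> j" "x ^ i = x ^ j"
    unfolding inj_on_def by blast
  show ?thesis
  proof (cases "i < j")
    case True thus ?thesis using ij by auto
  next
    case False thus ?thesis using ij by (intro exI[of _ j] exI[of _ i]) auto
  qed
qed

lemma unit_pow_fact:
  fixes x :: "'a::{comm_ring_1,finite}"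
  assumes "x dvd 1"
  shows "x ^ fact (card (UNIV::'a set)) = 1"
proof -
  obtain i j where ij: "i < j" "j \<le> card (UNIV::'a set)" "x ^ i = x ^ j" using pigeon_pow by blast
  have "x ^ i * x ^ (j - i) = x ^ (i + (j - i))" by (simp only: power_add)
  also have "\<dots> = x ^ i * 1" using ij by simp
  finally have "x ^ i * x ^ (j - i) = x ^ i * 1" .
  moreover have "x ^ i dvd 1" using dvd_power_same[OF assms, of i] by simp
  ultimately have x1: "x ^ (j - i) = 1"
  proof -
    assume a1: "x ^ i * x ^ (j - i) = x ^ i * 1" and a2: "x ^ i dvd 1"
    from a2 obtain y where y: "1 = x ^ i * y" by (rule dvdE)
    have "y * (x ^ i * x ^ (j - i)) = (x ^ i * y) * x ^ (j - i)" by (simp only: ac_simps)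
    hence "x ^ (j - i) = y * (x ^ i * x ^ (j - i))" by (simp add: y[symmetric])
    also have "\<dots> = y * x ^ i" using a1 by simp
    also have "\<dots> = 1" by (simp add: y mult.commute)
    finally show ?thesis .
  qed
  have "j - i dvd fact (card (UNIV::'a set))" using ij by (intro dvd_fact) auto
  then obtain c where "fact (card (UNIV::'a set)) = (j - i) * c" by blast
  thus ?thesis using x1 by (simp add: power_mult)
qed

lemma ue_props:
  shows "unit_exponent TYPE('a::{comm_ring_1,finite}) > 0"
    and "\<And>x::'a. x dvd 1 \<Longrightarrow> x ^ unit_exponent TYPE('a) = 1"
proof -
  have ex: "\<exists>e. 0 < e \<and> (\<forall>x::'a. x dvd 1 \<longrightarrow> x ^ e = 1)"
    using unit_pow_fact by (intro exI[of _ "fact (card (UNIV::'a set))"]) auto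
  have "0 < unit_exponent TYPE('a) \<and> (\<forall>x::'a. x dvd 1 \<longrightarrow> x ^ unit_exponent TYPE('a) = 1)"
    unfolding unit_exponent_def by (rule LeastI_ex[OF ex])
  thus "unit_exponent TYPE('a) > 0" "\<And>x::'a. x dvd 1 \<Longrightarrow> x ^ unit_exponent TYPE('a) = 1" by auto
qed

lemma pow_gcd_one:
  fixes q :: "'a::comm_ring_1"
  shows "q ^ a = 1 \<Longrightarrow> q ^ b = 1 \<Longrightarrow> q ^ gcd a b = 1"
proof (induction a b rule: gcd_nat_induct)
  case (step m n)
  have "q ^ m = q ^ (n * (m div n) + m mod n)" by simp
  also have "\<dots> = (q ^ n) ^ (m div n) * q ^ (m mod n)" by (simp only: power_add power_mult)
  finally have "q ^ m = (q ^ n) ^ (m div n) * q ^ (m mod n)" .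
  hence "q ^ (m mod n) = 1" using step by simp
  thus ?case using step by (simp add: gcd_non_0_nat)
qed simp

lemma eventually_periodic:
  fixes r :: "'a::{comm_ring_1,finite}"
  defines "C \<equiv> card (UNIV :: 'a set)" and "\<alpha> \<equiv> unit_exponent TYPE('a)"
  shows "r ^ (C * C * \<alpha> + \<alpha>) = r ^ (C * C * \<alpha>)"
proof -
  obtain i j where ij: "i < j" "j \<le> C" "r ^ i = r ^ j" using pigeon_pow[of r] unfolding C_def by blast
  define p where "p = j - i"
  have p1: "p \<ge> 1" "p \<le> C" using ij by (auto simp: p_def)
  have per1: "r ^ (n + p) = r ^ n" if "n \<ge> i" for n
  proof -
    have "r ^ (n + p) = r ^ (n - i) * r ^ j" using that ij by (simp add: p_def power_add[symmetric])
    also have "\<dots> = r ^ (n - i) * r ^ i" using ij by simp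
    also have "\<dots> = r ^ n" using that by (simp add: power_add[symmetric])
    finally show ?thesis .
  qed
  have perc: "r ^ (n + p * c) = r ^ n" if "n \<ge> i" for n c
  proof (induction c)
    case (Suc c)
    have "r ^ (n + p * Suc c) = r ^ ((n + p * c) + p)" by (simp add: algebra_simps)
    also have "\<dots> = r ^ (n + p * c)" using that by (intro per1) simp
    finally show ?case using Suc by simp
  qed simp
  define M where "M = i * p"
  have Mi: "M \<ge> i" using p1 by (simp add: M_def)
  define s where "s = r ^ M"
  define t where "t = r ^ (M + 1)"
  have ss: "s * s = s"
  proof -
    have "s * s = r ^ (M + p * i)" by (simp add: s_def M_def power_add[symmetric] mult.commute)
    also have "\<dots> = s" unfolding s_def using Mi by (rule perc)
    finally show ?thesis .
  qed
  have ts: "t * s = t"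
  proof -
    have "t * s = r ^ ((M + 1) + p * i)" by (simp add: t_def s_def M_def power_add mult_ac)
    also have "\<dots> = t" unfolding t_def using Mi by (intro perc) simp
    finally show ?thesis .
  qed
  obtain p' where p': "p = Suc p'" using p1 by (cases p) auto
  have tp: "t ^ p = s"
  proof -
    have "(M + 1) * p = M + p * (i * p' + 1)" by (simp add: M_def p' algebra_simps)
    have "t ^ p = r ^ ((M + 1) * p)" by (simp only: t_def power_mult)
    hence "t ^ p = r ^ (M + p * (i * p' + 1))" by (simp only: \<open>(M + 1) * p = M + p * (i * p' + 1)\<close>)
    also have "\<dots> = s" unfolding s_def using Mi by (rule perc)
    finally show ?thesis .
  qed
  define w where "w = t + (1 - s)"
  have wn: "w ^ n = t ^ n + (1 - s)" if "n \<ge> 1" for n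
    using that
  proof (induction n rule: dec_induct)
    case base thus ?case by (simp add: w_def)
  next
    case (step n)
    have t0: "t ^ n * (1 - s) = 0"
    proof -
      obtain n' where "n = Suc n'" using step by (cases n) auto
      hence "t ^ n * (1 - s) = t ^ n' * (t - t * s)" by (simp add: algebra_simps)
      thus ?thesis using ts by simp
    qed
    have t1: "t * (1 - s) = 0" using ts by (simp add: algebra_simps)
    have s1: "(1 - s) * (1 - s) = 1 - s" using ss by (simp add: algebra_simps)
    have "w ^ Suc n = (t ^ n + (1 - s)) * (t + (1 - s))" using step by (simp add: w_def mult.commute)
    also have "\<dots> = t ^ Suc n + t ^ n * (1 - s) + (1 - s) * t + (1 - s) * (1 - s)"
      by (simp add: algebra_simps)
    also have "\<dots> = t ^ Suc n + (1 - s)" using t0 t1 s1 by (simp add: mult.commute)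
    finally show ?case .
  qed
  have "w ^ p = 1" using wn[of p] p1 tp by simp
  hence "w dvd 1" using p' by (metis dvdI power_Suc)
  hence "w ^ \<alpha> = 1" unfolding \<alpha>_def by (rule ue_props(2))
  moreover have apos: "\<alpha> \<ge> 1" unfolding \<alpha>_def using ue_props(1) by (simp add: Suc_le_eq)
  ultimately have ta: "t ^ \<alpha> = s" using wn[of \<alpha>] by simp
  have sn: "s ^ Suc n = s" for n by (induction n) (simp_all add: ss)
  have sa: "s ^ \<alpha> = s"
  proof -
    obtain a' where "\<alpha> = Suc a'" using apos by (cases \<alpha>) auto
    thus ?thesis using sn by simp
  qed
  have key: "r ^ (M * \<alpha> + \<alpha>) = r ^ (M * \<alpha>)"
  proof -
    have "t ^ \<alpha> = r ^ ((M + 1) * \<alpha>)" by (simp only: t_def power_mult)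
    hence "r ^ (M * \<alpha> + \<alpha>) = t ^ \<alpha>" by (simp add: add.commute)
    also have "\<dots> = s ^ \<alpha>" using ta sa by simp
    also have "\<dots> = r ^ (M * \<alpha>)" by (simp add: s_def power_mult)
    finally show ?thesis .
  qed
  have "M \<le> C * C" unfolding M_def using ij p1 by (intro mult_le_mono) auto
  hence "M * \<alpha> \<le> C * C * \<alpha>" by simp
  then obtain \<delta> where d: "C * C * \<alpha> = M * \<alpha> + \<delta>" using le_Suc_ex by blast
  have e1: "C * C * \<alpha> + \<alpha> = \<delta> + (M * \<alpha> + \<alpha>)" using d by simp
  have e2: "C * C * \<alpha> = \<delta> + M * \<alpha>" using d by simp
  have "r ^ (C * C * \<alpha> + \<alpha>) = r ^ \<delta> * r ^ (M * \<alpha> + \<alpha>)" by (simp only: e1 power_add)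
  also have "\<dots> = r ^ \<delta> * r ^ (M * \<alpha>)" by (simp add: key)
  also have "\<dots> = r ^ (C * C * \<alpha>)" by (simp only: e2 power_add)
  finally show ?thesis .
qed

lemma N_dvd_ue:
  fixes q :: "'a::{comm_ring_1,finite}"
  assumes N: "N \<ge> 2" and Nu: "of_nat N dvd (1::'a)"
    and root: "poly (map_poly of_int (cyclotomic N)) q = 0"
    and nt: "(0::'a) \<noteq> 1"
  shows "N dvd unit_exponent TYPE('a)"
proof -
  have N0: "N > 0" using N by simp
  have qN: "q ^ N = 1" by (rule cyc_root_pow[OF N0 root])
  have qu: "q dvd 1" using qN N by (metis dvdI power_Suc Suc_pred N0)
  have qa: "q ^ unit_exponent TYPE('a) = 1" by (rule ue_props(2)[OF qu])
  define g where "g = gcd (unit_exponent TYPE('a)) N"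
  have qg: "q ^ g = 1" unfolding g_def using qa qN by (rule pow_gcd_one)
  have gN: "g dvd N" by (simp add: g_def)
  have g0: "g > 0" using N0 by (simp add: g_def)
  have "g = N"
  proof (rule ccontr)
    assume "g \<noteq> N"
    hence "g < N" using gN N0 by (simp add: dvd_imp_le le_neq_implies_less)
    thus False using cyc_root_proper[OF N0 root Nu gN g0 _ qg] nt by blast
  qed
  thus ?thesis by (metis g_def gcd_dvd1)
qed

definition DD :: "nat \<Rightarrow> nat \<Rightarrow> nat \<Rightarrow> ((nat \<times> nat) \<times> (nat \<times> nat) \<Rightarrow> 'a::comm_ring_1) \<Rightarrow> bool" where
  "DD N s t X \<longleftrightarrow> (\<forall>p. X p \<noteq> 0 \<longrightarrow> fst (fst p) \<le> s \<and> snd (fst p) \<le> t \<and> fst p \<in> Idx N \<and> snd p \<in> Idx N)"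

lemma DD_D:
  assumes "DD N s t X" "X p \<noteq> 0"
  shows "fst (fst p) \<le> s \<and> snd (fst p) \<le> t \<and> fst p \<in> Idx N \<and> snd p \<in> Idx N"
  using assms unfolding DD_def by blast

lemma finite_Idx[simp]: "finite (Idx N)" by (simp add: Idx_def)

lemma Idx_iff: "(m, n) \<in> Idx N \<longleftrightarrow> m < N \<and> n < N" by (simp add: Idx_def)

lemma bconst_nz:
  assumes "bconst N q u a (m, n) (m', n') k \<noteq> 0"
  shows "k = ((m + m') mod N, (n + n') mod N)"
  using assms by (simp add: bconst_def split: if_splits)

lemma bconst_small:
  assumes "m + m' < N" "n + n' < N"
  shows "bconst N q u a (m, n) (m', n') k = (if k = (m + m', n + n') then q ^ (n * m') else 0)"
  using assms by (simp add: bconst_def)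

lemma tmul_eq:
  assumes X: "DD N s1 t1 X" and Y: "DD N s2 t2 Y" and st: "s1 + s2 < N" "t1 + t2 < N"
  shows "tmul N (bconst N q u a) c2 X Y = tmul N (bconst N q 1 0) c2 X Y"
  unfolding tmul_def
proof (intro ext, clarify, intro sum.cong refl)
  fix k l p p'
  show "X p * Y p' * bconst N q u a (fst p) (fst p') k * c2 (snd p) (snd p') l =
        X p * Y p' * bconst N q 1 0 (fst p) (fst p') k * c2 (snd p) (snd p') l"
  proof (cases "X p = 0 \<or> Y p' = 0")
    case True thus ?thesis by auto
  next
    case False
    hence "fst (fst p) \<le> s1" "snd (fst p) \<le> t1" "fst (fst p') \<le> s2" "snd (fst p') \<le> t2"
      using DD_D[OF X] DD_D[OF Y] by auto
    hence "fst (fst p) + fst (fst p') < N" "snd (fst p) + snd (fst p') < N" using st by auto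
    thus ?thesis
      by (cases "fst p", cases "fst p'") (simp add: bconst_small)
  qed
qed

lemma tmul_D:
  assumes X: "DD N s1 t1 X" and Y: "DD N s2 t2 Y" and st: "s1 + s2 < N" "t1 + t2 < N"
  shows "DD N (s1 + s2) (t1 + t2) (tmul N (bconst N q u a) (bconst N q u' a') X Y)"
  unfolding DD_def
proof (intro allI impI)
  fix P :: "(nat \<times> nat) \<times> (nat \<times> nat)"
  obtain k l where P: "P = (k, l)" by (cases P)
  assume "tmul N (bconst N q u a) (bconst N q u' a') X Y P \<noteq> 0"
  hence "(\<Sum>p\<in>Idx N \<times> Idx N. \<Sum>p'\<in>Idx N \<times> Idx N.
      X p * Y p' * bconst N q u a (fst p) (fst p') k * bconst N q u' a' (snd p) (snd p') l) \<noteq> 0"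
    by (simp add: tmul_def P)
  then obtain p where "(\<Sum>p'\<in>Idx N \<times> Idx N.
      X p * Y p' * bconst N q u a (fst p) (fst p') k * bconst N q u' a' (snd p) (snd p') l) \<noteq> 0"
    by (meson sum.not_neutral_contains_not_neutral)
  then obtain p' where nz: "X p * Y p' * bconst N q u a (fst p) (fst p') k * bconst N q u' a' (snd p) (snd p') l \<noteq> 0"
    by (meson sum.not_neutral_contains_not_neutral)
  hence nzs: "X p \<noteq> 0" "Y p' \<noteq> 0" "bconst N q u a (fst p) (fst p') k \<noteq> 0" "bconst N q u' a' (snd p) (snd p') l \<noteq> 0"
    by auto
  obtain m n m' n' where f: "fst p = (m, n)" "fst p' = (m', n')" by (cases "fst p", cases "fst p'") auto
  obtain m2 n2 m2' n2' where g: "snd p = (m2, n2)" "snd p' = (m2', n2')" by (cases "snd p", cases "snd p'") auto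
  have b: "m \<le> s1" "n \<le> t1" "m' \<le> s2" "n' \<le> t2" using DD_D[OF X nzs(1)] DD_D[OF Y nzs(2)] f by auto
  have k: "k = ((m + m') mod N, (n + n') mod N)" using bconst_nz nzs(3) f by metis
  have l: "l = ((m2 + m2') mod N, (n2 + n2') mod N)" using bconst_nz nzs(4) g by metis
  have N0: "N > 0" using st by simp
  have "k = (m + m', n + n')" using k b st by simp
  thus "fst (fst P) \<le> s1 + s2 \<and> snd (fst P) \<le> t1 + t2 \<and> fst P \<in> Idx N \<and> snd P \<in> Idx N"
    using b st l N0 by (simp add: P Idx_iff)
qed

lemma tmul_bas_left:
  assumes "P \<in> Idx N \<times> Idx N"
  shows "tmul N c1 c2 (bas P) Y (k, l) = (\<Sum>p'\<in>Idx N \<times> Idx N. Y p' * c1 (fst P) (fst p') k * c2 (snd P) (snd p') l)"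
proof -
  have "tmul N c1 c2 (bas P) Y (k, l) = (\<Sum>p\<in>Idx N \<times> Idx N. if p = P then (\<Sum>p'\<in>Idx N \<times> Idx N. Y p' * c1 (fst P) (fst p') k * c2 (snd P) (snd p') l) else 0)"
    unfolding tmul_def prod.case by (intro sum.cong refl) (auto simp: bas_def sum_distrib_left mult.assoc)
  also have "\<dots> = (\<Sum>p'\<in>Idx N \<times> Idx N. Y p' * c1 (fst P) (fst p') k * c2 (snd P) (snd p') l)"
    using assms by (simp add: sum.delta)
  finally show ?thesis .
qed

lemma tmul_bas_bas:
  assumes "P \<in> Idx N \<times> Idx N" "P' \<in> Idx N \<times> Idx N"
  shows "tmul N c1 c2 (bas P) (bas P') (k, l) = c1 (fst P) (fst P') k * c2 (snd P) (snd P') l"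
proof -
  have "tmul N c1 c2 (bas P) (bas P') (k, l) = (\<Sum>p'\<in>Idx N \<times> Idx N. if p' = P' then c1 (fst P) (fst P') k * c2 (snd P) (snd P') l else 0)"
    unfolding tmul_bas_left[OF assms(1)] by (intro sum.cong refl) (auto simp: bas_def)
  thus ?thesis using assms(2) by (simp add: sum.delta)
qed

lemma tmul_add_left:
  "tmul N c1 c2 (\<lambda>p. X1 p + X2 p) Y = (\<lambda>kl. tmul N c1 c2 X1 Y kl + tmul N c1 c2 X2 Y kl)"
  unfolding tmul_def by (intro ext) (auto simp: algebra_simps sum.distrib split: prod.splits)

abbreviation "one0 \<equiv> (bas ((0::nat, 0::nat), (0::nat, 0::nat)) :: (nat \<times> nat) \<times> (nat \<times> nat) \<Rightarrow> 'a::comm_ring_1)"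
abbreviation "GG \<equiv> (bas ((1::nat, 0::nat), (1::nat, 0::nat)) :: (nat \<times> nat) \<times> (nat \<times> nat) \<Rightarrow> 'a::comm_ring_1)"
abbreviation "XX \<equiv> (\<lambda>p. bas ((0::nat, 0::nat), (0::nat, 1::nat)) p + bas ((0::nat, 1::nat), (1::nat, 0::nat)) p :: 'a::comm_ring_1)"

lemma gen_coact_unfold:
  "gen_coact N q c i = tmul N c (bconst N q 1 0) ((tmul N c (bconst N q 1 0) GG ^^ fst i) one0)
      ((tmul N c (bconst N q 1 0) XX ^^ snd i) one0)"
  by (simp add: gen_coact_def Let_def)

lemma bas_D:
  assumes "m \<le> s" "n \<le> t" "(m, n) \<in> Idx N" "l \<in> Idx N"
  shows "DD N s t (bas ((m, n), l))"
  using assms unfolding DD_def bas_def by auto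

lemma XX_D: "N \<ge> 2 \<Longrightarrow> DD N 0 1 (XX :: _ \<Rightarrow> 'a::comm_ring_1)"
  unfolding DD_def bas_def by (auto simp: Idx_iff)

lemma Gpow:
  assumes "m < N"
  shows "(tmul N (bconst N q u a) (bconst N q 1 0) GG ^^ m) one0 = (bas ((m, 0), (m, 0)) :: _ \<Rightarrow> 'a::comm_ring_1)"
  using assms
proof (induction m)
  case 0 thus ?case by simp
next
  case (Suc m)
  have i1: "((1::nat, 0::nat), (1::nat, 0::nat)) \<in> Idx N \<times> Idx N" using Suc by (simp add: Idx_iff)
  have i2: "((m, 0), (m, 0)) \<in> Idx N \<times> Idx N" using Suc by (simp add: Idx_iff)
  show ?case
  proof (rule ext, clarify)
    fix k l :: "nat \<times> nat"
    have "(tmul N (bconst N q u a) (bconst N q 1 0) GG ^^ Suc m) one0 (k, l)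
        = tmul N (bconst N q u a) (bconst N q 1 0) GG (bas ((m, 0), (m, 0))) (k, l)"
      using Suc by simp
    also have "\<dots> = bconst N q u a (1, 0) (m, 0) k * bconst N q 1 0 (1, 0) (m, 0) l"
      using tmul_bas_bas[OF i1 i2] by simp
    also have "\<dots> = bas ((Suc m, 0), (Suc m, 0)) (k, l)"
      using Suc by (simp add: bconst_small bas_def)
    finally show "(tmul N (bconst N q u a) (bconst N q 1 0) GG ^^ Suc m) one0 (k, l) = bas ((Suc m, 0), (Suc m, 0)) (k, l)" .
  qed
qed

lemma Xpow:
  assumes N: "N \<ge> 2" and n: "n < N"
  shows "(tmul N (bconst N q u a) (bconst N q 1 0) XX ^^ n) one0 = (tmul N (bconst N q 1 0) (bconst N q 1 0) XX ^^ n) one0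
    \<and> DD N 0 n ((tmul N (bconst N q 1 0) (bconst N q 1 0) XX ^^ n) (one0 :: _ \<Rightarrow> 'a::comm_ring_1))
    \<and> (\<forall>l. (tmul N (bconst N q 1 0) (bconst N q 1 0) XX ^^ n) (one0 :: _ \<Rightarrow> 'a) ((0, 0), l) = (if l = (0, n) then 1 else 0))"
  using n
proof (induction n)
  case 0
  show ?case using N by (auto simp: bas_def DD_def Idx_iff)
next
  case (Suc n)
  define Y :: "_ \<Rightarrow> 'a" where "Y = (tmul N (bconst N q 1 0) (bconst N q 1 0) XX ^^ n) one0"
  have IH: "(tmul N (bconst N q u a) (bconst N q 1 0) XX ^^ n) one0 = Y" "DD N 0 n Y"
      "\<And>l. Y ((0, 0), l) = (if l = (0, n) then 1 else 0)"
  proof -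
    have "n < N" using Suc.prems by simp
    note IH0 = Suc.IH[OF this, folded Y_def]
    show "(tmul N (bconst N q u a) (bconst N q 1 0) XX ^^ n) one0 = Y" using IH0 by (elim conjE)
    show "DD N 0 n Y" using IH0 by (elim conjE)
    show "\<And>l. Y ((0, 0), l) = (if l = (0, n) then 1 else 0)" using IH0 by (elim conjE) (rule spec)
  qed
  have e1: "(tmul N (bconst N q u a) (bconst N q 1 0) XX ^^ Suc n) one0 = tmul N (bconst N q u a) (bconst N q 1 0) XX Y"
    using IH(1) by simp
  have e2: "(tmul N (bconst N q 1 0) (bconst N q 1 0) XX ^^ Suc n) one0 = tmul N (bconst N q 1 0) (bconst N q 1 0) XX Y"
    by (simp add: Y_def)
  have eq: "tmul N (bconst N q u a) (bconst N q 1 0) XX Y = tmul N (bconst N q 1 0) (bconst N q 1 0) XX Y"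
    by (rule tmul_eq[OF XX_D[OF N] IH(2)]) (use Suc in auto)
  have D: "DD N (0 + 0) (1 + n) (tmul N (bconst N q 1 0) (bconst N q 1 0) XX Y)"
    by (rule tmul_D[OF XX_D[OF N] IH(2)]) (use Suc in auto)
  have iA: "((0::nat, 0::nat), (0::nat, 1::nat)) \<in> Idx N \<times> Idx N" and iB: "((0::nat, 1::nat), (1::nat, 0::nat)) \<in> Idx N \<times> Idx N"
    using N by (auto simp: Idx_iff)
  have iY: "((0::nat, 0::nat), (0, n)) \<in> Idx N \<times> Idx N" using Suc by (auto simp: Idx_iff)
  have val: "tmul N (bconst N q 1 0) (bconst N q 1 0) XX Y ((0, 0), l) = (if l = (0, Suc n) then 1 else 0)" for l
  proof -
    have B0: "tmul N (bconst N q 1 0) (bconst N q 1 0) (bas ((0, 1), (1, 0))) Y ((0, 0), l) = 0"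
      unfolding tmul_bas_left[OF iB]
    proof (intro sum.neutral ballI)
      fix p' :: "(nat \<times> nat) \<times> (nat \<times> nat)"
      obtain m j l0 where p': "p' = ((m, j), l0)" by (cases p') auto
      show "Y p' * bconst N q 1 0 (fst ((0, 1), (1, 0))) (fst p') (0, 0) * bconst N q 1 0 (snd ((0, 1), (1, 0))) (snd p') l = 0"
      proof (cases "Y p' = 0")
        case False
        hence "m = 0" "j \<le> n" using DD_D[OF IH(2) False] p' by auto
        thus ?thesis using p' Suc by (simp add: bconst_small)
      qed simp
    qed
    have A0: "tmul N (bconst N q 1 0) (bconst N q 1 0) (bas ((0, 0), (0, 1))) Y ((0, 0), l) = (if l = (0, Suc n) then 1 else 0)"
      unfolding tmul_bas_left[OF iA]
    proof -
      have "(\<Sum>p'\<in>Idx N \<times> Idx N. Y p' * bconst N q 1 0 (fst ((0, 0), (0, 1))) (fst p') (0, 0) * bconst N q 1 0 (snd ((0, 0), (0, 1))) (snd p') l)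
          = (\<Sum>p'\<in>Idx N \<times> Idx N. if p' = ((0, 0), (0, n)) then (if l = (0, Suc n) then 1 else 0) else 0)"
      proof (intro sum.cong refl)
        fix p' :: "(nat \<times> nat) \<times> (nat \<times> nat)"
        obtain m j l0 where p': "p' = ((m, j), l0)" by (cases p') auto
        show "Y p' * bconst N q 1 0 (fst ((0, 0), (0, 1))) (fst p') (0, 0) * bconst N q 1 0 (snd ((0, 0), (0, 1))) (snd p') l
            = (if p' = ((0, 0), (0, n)) then (if l = (0, Suc n) then 1 else 0) else 0)"
        proof (cases "Y p' = 0")
          case True
          have "p' \<noteq> ((0, 0), (0, n))" using True IH(3)[of "(0, n)"] by auto
          thus ?thesis using True by simp
        next
          case False
          hence mj: "m = 0" "j \<le> n" using DD_D[OF IH(2) False] p' by auto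
          show ?thesis
          proof (cases "j = 0")
            case False
            thus ?thesis using p' mj Suc by (simp add: bconst_small)
          next
            case True
            hence l0: "l0 = (0, n)" using IH(3)[of l0] \<open>Y p' \<noteq> 0\<close> p' mj by (auto split: if_splits)
            thus ?thesis using p' mj True IH(3) Suc by (simp add: bconst_small)
          qed
        qed
      qed
      also have "\<dots> = (if l = (0, Suc n) then 1 else 0)" using iY by (simp add: sum.delta)
      finally show "(\<Sum>p'\<in>Idx N \<times> Idx N. Y p' * bconst N q 1 0 (fst ((0, 0), (0, 1))) (fst p') (0, 0) * bconst N q 1 0 (snd ((0, 0), (0, 1))) (snd p') l) = (if l = (0, Suc n) then 1 else 0)" .
    qed
    show ?thesis unfolding tmul_add_left using A0 B0 by simp
  qed
  show ?case using e1 e2 eq D val by simp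
qed

lemma Delta_parts:
  assumes N: "N \<ge> 2" and i: "(m, n) \<in> Idx N"
  shows "gen_coact N q (bconst N q u a) (m, n) = taft_Delta N q (m, n)"
    and "taft_Delta N q (m, n) = tmul N (bconst N q 1 0) (bconst N q 1 0) (bas ((m, 0), (m, 0)))
          ((tmul N (bconst N q 1 0) (bconst N q 1 0) XX ^^ n) (one0 :: _ \<Rightarrow> 'a::comm_ring_1))"
    and "DD N m n (taft_Delta N q (m, n) :: _ \<Rightarrow> 'a)"
proof -
  have mN: "m < N" and nN: "n < N" using i by (auto simp: Idx_iff)
  define Y :: "_ \<Rightarrow> 'a" where "Y = (tmul N (bconst N q 1 0) (bconst N q 1 0) XX ^^ n) one0"
  note X = Xpow[OF N nN, where u = u and a = a and q = q, folded Y_def]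
  have YD: "DD N 0 n Y" using X by blast
  have Yeq: "(tmul N (bconst N q u a) (bconst N q 1 0) XX ^^ n) one0 = Y" using X by blast
  have BD: "DD N m 0 (bas ((m, 0), (m, 0)) :: _ \<Rightarrow> 'a)" using mN by (intro bas_D) (auto simp: Idx_iff)
  have T: "taft_Delta N q (m, n) = tmul N (bconst N q 1 0) (bconst N q 1 0) (bas ((m, 0), (m, 0))) Y"
    unfolding taft_Delta_def gen_coact_unfold fst_conv snd_conv Gpow[OF mN] Y_def ..
  show "taft_Delta N q (m, n) = tmul N (bconst N q 1 0) (bconst N q 1 0) (bas ((m, 0), (m, 0)))
          ((tmul N (bconst N q 1 0) (bconst N q 1 0) XX ^^ n) (one0 :: _ \<Rightarrow> 'a::comm_ring_1))"
    using T by (simp add: Y_def)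
  have "gen_coact N q (bconst N q u a) (m, n) = tmul N (bconst N q u a) (bconst N q 1 0) (bas ((m, 0), (m, 0))) Y"
    unfolding gen_coact_unfold fst_conv snd_conv Gpow[OF mN] Yeq ..
  also have "\<dots> = tmul N (bconst N q 1 0) (bconst N q 1 0) (bas ((m, 0), (m, 0))) Y"
    by (rule tmul_eq[OF BD YD]) (use mN nN in auto)
  finally show "gen_coact N q (bconst N q u a) (m, n) = taft_Delta N q (m, n)" using T by simp
  have "DD N (m + 0) (0 + n) (tmul N (bconst N q 1 0) (bconst N q 1 0) (bas ((m, 0), (m, 0))) Y)"
    by (rule tmul_D[OF BD YD]) (use mN nN in auto)
  thus "DD N m n (taft_Delta N q (m, n) :: _ \<Rightarrow> 'a)" using T by simp
qed

lemma Delta_first: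
  assumes N: "N \<ge> 2" and i: "(m, n) \<in> Idx N"
  shows "(taft_Delta N q (m, n) :: _ \<Rightarrow> 'a::comm_ring_1) ((m', 0), l) = (if m' = m \<and> l = (m, n) then 1 else 0)"
proof -
  have mN: "m < N" and nN: "n < N" using i by (auto simp: Idx_iff)
  define Y :: "_ \<Rightarrow> 'a" where "Y = (tmul N (bconst N q 1 0) (bconst N q 1 0) XX ^^ n) one0"
  note X = Xpow[OF N nN, where u = 1 and a = 0 and q = q, folded Y_def]
  have YD: "DD N 0 n Y" using X by blast
  have Yv: "\<And>l. Y ((0, 0), l) = (if l = (0, n) then 1 else 0)" using X by blast
  have iP: "((m, 0), (m, 0)) \<in> Idx N \<times> Idx N" using mN N by (auto simp: Idx_iff)
  have iY: "((0::nat, 0::nat), (0, n)) \<in> Idx N \<times> Idx N" using nN N by (auto simp: Idx_iff)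
  have "(taft_Delta N q (m, n) :: _ \<Rightarrow> 'a) ((m', 0), l) = tmul N (bconst N q 1 0) (bconst N q 1 0) (bas ((m, 0), (m, 0))) Y ((m', 0), l)"
    using Delta_parts(2)[OF N i, where 'a = 'a and q = q] by (simp add: Y_def)
  also have "\<dots> = (\<Sum>p'\<in>Idx N \<times> Idx N. Y p' * bconst N q 1 0 (m, 0) (fst p') (m', 0) * bconst N q 1 0 (m, 0) (snd p') l)"
    unfolding tmul_bas_left[OF iP] by simp
  also have "\<dots> = (\<Sum>p'\<in>Idx N \<times> Idx N. if p' = ((0, 0), (0, n)) then (if m' = m \<and> l = (m, n) then 1 else 0) else 0)"
  proof (intro sum.cong refl)
    fix p' :: "(nat \<times> nat) \<times> (nat \<times> nat)"
    assume p'I: "p' \<in> Idx N \<times> Idx N"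
    obtain m0 j l0 where p': "p' = ((m0, j), l0)" by (cases p') auto
    show "Y p' * bconst N q 1 0 (m, 0) (fst p') (m', 0) * bconst N q 1 0 (m, 0) (snd p') l
        = (if p' = ((0, 0), (0, n)) then (if m' = m \<and> l = (m, n) then 1 else 0) else 0)"
    proof (cases "Y p' = 0")
      case True
      have "p' \<noteq> ((0, 0), (0, n))" using True Yv[of "(0, n)"] by auto
      thus ?thesis using True by simp
    next
      case False
      hence mj: "m0 = 0" "j \<le> n" using DD_D[OF YD False] p' by auto
      show ?thesis
      proof (cases "j = 0")
        case False
        thus ?thesis using p' mj mN nN by (simp add: bconst_small)
      next
        case True
        hence l0: "l0 = (0, n)" using Yv[of l0] \<open>Y p' \<noteq> 0\<close> p' mj by (auto split: if_splits)
        thus ?thesis using p' mj True Yv mN nN by (auto simp: bconst_small)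
      qed
    qed
  qed
  also have "\<dots> = (if m' = m \<and> l = (m, n) then 1 else 0)" using iY by (simp add: sum.delta)
  finally show ?thesis .
qed

lemma Delta_g:
  assumes N: "N \<ge> 2"
  shows "taft_Delta N q (1, 0) = (GG :: _ \<Rightarrow> 'a::comm_ring_1)"
proof (rule ext, clarify)
  fix k l :: "nat \<times> nat"
  have i1: "((1::nat, 0::nat), (1::nat, 0::nat)) \<in> Idx N \<times> Idx N" and i0: "((0::nat, 0::nat), (0::nat, 0::nat)) \<in> Idx N \<times> Idx N"
    using N by (auto simp: Idx_iff)
  have "(taft_Delta N q (1, 0) :: _ \<Rightarrow> 'a) (k, l) = tmul N (bconst N q 1 0) (bconst N q 1 0) GG one0 (k, l)"
    using Delta_parts(2)[OF N, where 'a = 'a and m = 1 and n = 0 and q = q] N by (simp add: Idx_iff)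
  also have "\<dots> = bconst N q 1 0 (1, 0) (0, 0) k * bconst N q 1 0 (1, 0) (0, 0) l"
    using tmul_bas_bas[OF i1 i0] by simp
  also have "\<dots> = GG (k, l)" using N by (simp add: bconst_small bas_def)
  finally show "(taft_Delta N q (1, 0) :: _ \<Rightarrow> 'a) (k, l) = GG (k, l)" .
qed

lemma gen_coact_eq:
  assumes N: "N \<ge> 2" and i: "i \<in> Idx N"
  shows "gen_coact N q (bconst N q u a) i = (taft_Delta N q i :: _ \<Rightarrow> 'a::comm_ring_1)"
  using Delta_parts(1)[OF N, of "fst i" "snd i"] i by simp

lemma Delta_D:
  assumes N: "N \<ge> 2" and i: "i \<in> Idx N" and nz: "(taft_Delta N q i :: _ \<Rightarrow> 'a::comm_ring_1) (k, l) \<noteq> 0"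
  shows "k \<in> Idx N"
proof -
  have "DD N (fst i) (snd i) (taft_Delta N q (fst i, snd i) :: _ \<Rightarrow> 'a)"
    using Delta_parts(3)[OF N, of "fst i" "snd i"] i by simp
  thus ?thesis using DD_D[of N "fst i" "snd i" "taft_Delta N q i :: _ \<Rightarrow> 'a" "(k, l)"] nz by simp
qed

lemma comod_char:
  assumes N: "N \<ge> 2" and cm: "comod_map N q u a (psi :: _ \<Rightarrow> _ \<Rightarrow> 'a::comm_ring_1)"
  shows "psi (1, 0) = (\<lambda>k. if k = (1, 0) then psi (1, 0) (1, 0) else 0)"
proof
  fix k0 :: "nat \<times> nat"
  have g: "(1::nat, 0::nat) \<in> Idx N" using N by (simp add: Idx_iff)
  have outside: "\<And>j k. k \<notin> Idx N \<Longrightarrow> psi j k = 0" and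
    eqn: "B_coact N q u a (psi (1, 0)) = (\<lambda>(k, l). \<Sum>j\<in>Idx N. taft_Delta N q (1, 0) (j, l) * psi j k)"
    using cm g unfolding comod_map_def by auto
  show "psi (1, 0) k0 = (if k0 = (1, 0) then psi (1, 0) (1, 0) else 0)"
  proof (cases "k0 = (1, 0)")
    case True thus ?thesis by simp
  next
    case False
    show ?thesis
    proof (cases "k0 \<in> Idx N")
      case False thus ?thesis using outside by auto
    next
      case True
      obtain m' n' where k0: "k0 = (m', n')" by (cases k0)
      have "B_coact N q u a (psi (1, 0)) ((m', 0), (m', n')) = (\<Sum>i\<in>Idx N. psi (1, 0) i * taft_Delta N q i ((m', 0), (m', n')))"
        unfolding B_coact_def
      proof (intro sum.cong refl)
        fix i assume "i \<in> Idx N"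
        show "psi (1, 0) i * gen_coact N q (bconst N q u a) i ((m', 0), (m', n')) = psi (1, 0) i * taft_Delta N q i ((m', 0), (m', n'))"
          by (simp only: gen_coact_eq[OF N \<open>i \<in> Idx N\<close>])
      qed
      also have "\<dots> = (\<Sum>i\<in>Idx N. if i = (m', n') then psi (1, 0) i else 0)"
      proof (intro sum.cong refl)
        fix i assume "i \<in> Idx N"
        then obtain m n where i: "i = (m, n)" "(m, n) \<in> Idx N" by (cases i) auto
        show "psi (1, 0) i * taft_Delta N q i ((m', 0), (m', n')) = (if i = (m', n') then psi (1, 0) i else 0)"
          using Delta_first[OF N i(2), of q m' "(m', n')"] i by auto
      qed
      also have "\<dots> = psi (1, 0) k0" using True k0 by (simp add: sum.delta)
      finally have L: "B_coact N q u a (psi (1, 0)) ((m', 0), (m', n')) = psi (1, 0) k0" .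
      have "B_coact N q u a (psi (1, 0)) ((m', 0), (m', n')) = (\<Sum>j\<in>Idx N. GG (j, (m', n')) * psi j (m', 0))"
        using eqn Delta_g[OF N, where 'a = 'a and q = q] by simp
      also have "\<dots> = 0" using False k0 by (intro sum.neutral) (auto simp: bas_def)
      finally show ?thesis using L False by simp
    qed
  qed
qed

definition psi0 :: "nat \<Rightarrow> nat \<times> nat \<Rightarrow> nat \<times> nat \<Rightarrow> 'a::comm_ring_1" where
  "psi0 N j = (if j \<in> Idx N then bas j else (\<lambda>_. 0))"

lemma psi0_comod:
  assumes N: "N \<ge> 2"
  shows "comod_map N q u a (psi0 N :: _ \<Rightarrow> _ \<Rightarrow> 'a::comm_ring_1)"
  unfolding comod_map_def
proof (intro conjI allI impI ballI)
  fix j k :: "nat \<times> nat" assume "k \<notin> Idx N"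
  thus "(psi0 N j :: _ \<Rightarrow> 'a) k = 0" by (auto simp: psi0_def bas_def)
next
  fix i assume i: "i \<in> Idx N"
  show "B_coact N q u a (psi0 N i :: _ \<Rightarrow> 'a) = (\<lambda>(k, l). \<Sum>j\<in>Idx N. taft_Delta N q i (j, l) * psi0 N j k)"
  proof (rule ext, clarify)
    fix k l :: "nat \<times> nat"
    have "B_coact N q u a (psi0 N i :: _ \<Rightarrow> 'a) (k, l) = (\<Sum>i'\<in>Idx N. if i' = i then taft_Delta N q i (k, l) else 0)"
      unfolding B_coact_def
    proof (intro sum.cong refl)
      fix i' assume "i' \<in> Idx N"
      show "psi0 N i i' * gen_coact N q (bconst N q u a) i' (k, l) = (if i' = i then taft_Delta N q i (k, l) else 0)"
        using i by (simp add: gen_coact_eq[OF N \<open>i' \<in> Idx N\<close>] psi0_def bas_def)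
    qed
    also have "\<dots> = taft_Delta N q i (k, l)" using i by (simp add: sum.delta)
    also have "\<dots> = (\<Sum>j\<in>Idx N. if j = k then taft_Delta N q i (j, l) else 0)"
      using Delta_D[OF N i, of q k l] by (auto simp: sum.delta)
    also have "\<dots> = (\<Sum>j\<in>Idx N. taft_Delta N q i (j, l) * psi0 N j k)"
      by (intro sum.cong refl) (auto simp: psi0_def bas_def)
    finally show "B_coact N q u a (psi0 N i :: _ \<Rightarrow> 'a) (k, l) = (\<Sum>j\<in>Idx N. taft_Delta N q i (j, l) * psi0 N j k)" .
  qed
qed

lemma power_eval:
  assumes N: "N \<ge> 2"
  shows "(algmul N (bconst N q u a) (\<lambda>k. if k = (1, 0) then r else 0) ^^ n) (bas (0, 0))
       = (\<lambda>k. if k = (n mod N, 0) then r ^ n * u ^ (n div N) else (0::'a::comm_ring_1))"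
proof (induction n)
  case 0 show ?case by (rule ext) (simp add: bas_def)
next
  case (Suc n)
  define j0 where "j0 = n mod N"
  have j0N: "j0 < N" using N by (simp add: j0_def)
  have g: "(1::nat, 0::nat) \<in> Idx N" and jI: "(j0, 0) \<in> Idx N" using N j0N by (auto simp: Idx_iff)
  have ar1: "Suc j0 mod N = Suc n mod N" by (simp add: j0_def mod_Suc_eq)
  have e: "Suc n = N * (n div N) + (1 + j0)" by (simp add: j0_def)
  have N0: "N \<noteq> 0" using N by simp
  have ar2: "Suc n div N = n div N + Suc j0 div N"
    by (subst e) (simp only: div_mult_self4[OF N0] plus_1_eq_Suc)
  show ?case
  proof (rule ext)
    fix k :: "nat \<times> nat"
    have "(algmul N (bconst N q u a) (\<lambda>k. if k = (1, 0) then r else 0) ^^ Suc n) (bas (0, 0)) k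
        = (\<Sum>i\<in>Idx N. \<Sum>j\<in>Idx N. (if i = (1, 0) then r else 0) * (if j = (j0, 0) then r ^ n * u ^ (n div N) else 0) * bconst N q u a i j k)"
      by (simp only: funpow.simps comp_apply Suc.IH) (simp add: algmul_def j0_def)
    also have "\<dots> = (\<Sum>i\<in>Idx N. if i = (1, 0) then r * (r ^ n * u ^ (n div N)) * bconst N q u a (1, 0) (j0, 0) k else 0)"
    proof (intro sum.cong refl)
      fix i assume "i \<in> Idx N"
      have "(\<Sum>j\<in>Idx N. (if i = (1, 0) then r else 0) * (if j = (j0, 0) then r ^ n * u ^ (n div N) else 0) * bconst N q u a i j k)
          = (\<Sum>j\<in>Idx N. if j = (j0, 0) then (if i = (1, 0) then r else 0) * (r ^ n * u ^ (n div N)) * bconst N q u a i (j0, 0) k else 0)"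
        by (intro sum.cong refl) auto
      also have "\<dots> = (if i = (1, 0) then r else 0) * (r ^ n * u ^ (n div N)) * bconst N q u a i (j0, 0) k"
        using jI by (simp only: sum.delta finite_Idx if_True)
      finally show "(\<Sum>j\<in>Idx N. (if i = (1, 0) then r else 0) * (if j = (j0, 0) then r ^ n * u ^ (n div N) else 0) * bconst N q u a i j k)
          = (if i = (1, 0) then r * (r ^ n * u ^ (n div N)) * bconst N q u a (1, 0) (j0, 0) k else 0)"
        by simp
    qed
    also have "\<dots> = r * (r ^ n * u ^ (n div N)) * bconst N q u a (1, 0) (j0, 0) k"
      using g by (simp only: sum.delta finite_Idx if_True)
    also have "\<dots> = (if k = (Suc n mod N, 0) then r ^ Suc n * u ^ (Suc n div N) else 0)"
      by (simp add: bconst_def ar1 ar2 power_add mult_ac)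
    finally show "(algmul N (bconst N q u a) (\<lambda>k. if k = (1, 0) then r else 0) ^^ Suc n) (bas (0, 0)) k
        = (if k = (Suc n mod N, 0) then r ^ Suc n * u ^ (Suc n div N) else 0)" .
  qed
qed

lemma word_val_rep:
  "word_val N c phi (replicate n z) = (algmul N c (phi (fst z) (snd z)) ^^ n) (bas (0, 0))"
  unfolding word_val_def by simp

theorem proposition3p6:
  fixes q u u' a a' :: "'a::{comm_ring_1,finite}" and N :: nat
  assumes "N \<ge> 2"
    and "of_nat N dvd (1::'a)"
    and "poly (map_poly of_int (cyclotomic N)) q = 0"
    and "u dvd 1" and "u' dvd 1"
    and "taft_Id N q u a = taft_Id N q u' a'"
  shows "u' ^ (unit_exponent TYPE('a) div N) = u ^ (unit_exponent TYPE('a) div N)"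
proof (cases "(0::'a) = 1")
  case True
  have "\<And>x::'a. x = 0" by (metis True mult_1_right mult_zero_right)
  thus ?thesis by metis
next
  case False
  note N = assms(1)
  have N0: "N > 0" using N by simp
  define \<alpha> where "\<alpha> = unit_exponent TYPE('a)"
  define \<kappa> where "\<kappa> = \<alpha> div N"
  have dv: "N dvd \<alpha>" unfolding \<alpha>_def using N_dvd_ue[OF N assms(2) assms(3) False] .
  have al: "\<alpha> = N * \<kappa>" using dv by (simp add: \<kappa>_def)
  have apos: "\<alpha> > 0" unfolding \<alpha>_def by (rule ue_props(1))
  define C where "C = card (UNIV :: 'a set)"
  define n1 where "n1 = C * C * \<alpha> + \<alpha>"
  define n2 where "n2 = C * C * \<alpha>"
  have n1: "n1 = N * (C * C * \<kappa> + \<kappa>)" by (simp add: n1_def al algebra_simps)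
  have n2: "n2 = N * (C * C * \<kappa>)" by (simp add: n2_def al algebra_simps)
  have n1d: "n1 div N = C * C * \<kappa> + \<kappa>" "n1 mod N = 0" using N0 by (simp_all add: n1)
  have n2d: "n2 div N = C * C * \<kappa>" "n2 mod N = 0" using N0 by (simp_all add: n2)
  have n12: "n1 \<noteq> n2" using apos by (simp add: n1_def n2_def)
  define z where "z = (1::nat, (1::nat, 0::nat))"
  define w1 where "w1 = replicate n1 z"
  define w2 where "w2 = replicate n2 z"
  have w12: "w1 \<noteq> w2" using n12 unfolding w1_def w2_def by (metis length_replicate)
  define c0 where "c0 = u ^ \<kappa>"
  have c0u: "c0 dvd 1" unfolding c0_def using dvd_power_same[OF assms(4), of \<kappa>] by simp
  have c00: "c0 \<noteq> 0" using c0u False by auto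
  define P :: "(nat \<times> (nat \<times> nat)) list \<Rightarrow> 'a" where
    "P = (\<lambda>w. (if w = w1 then 1 else 0) - (if w = w2 then c0 else 0))"
  have supp: "{w. P w \<noteq> 0} = {w1, w2}" using w12 c00 False by (auto simp: P_def)
  have Pw1: "P w1 = 1" and Pw2: "P w2 = - c0" using w12 by (auto simp: P_def)
  have PT: "P \<in> T_carrier N"
    unfolding T_carrier_def
  proof (rule CollectI, rule conjI)
    show "finite {w. P w \<noteq> 0}" using supp by simp
    show "\<forall>w. P w \<noteq> 0 \<longrightarrow> (\<forall>z\<in>set w. 1 \<le> fst z \<and> snd z \<in> Idx N)"
    proof (intro allI impI ballI)
      fix w zz assume "P w \<noteq> 0" "zz \<in> set w"
      hence "w = w1 \<or> w = w2" using supp by blast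
      hence "zz = z" using \<open>zz \<in> set w\<close> by (auto simp: w1_def w2_def)
      thus "1 \<le> fst zz \<and> snd zz \<in> Idx N" using N by (simp add: z_def Idx_iff)
    qed
  qed
  have eval: "T_eval N c phi P = (\<lambda>k. word_val N c phi w1 k - c0 * word_val N c phi w2 k)" for c phi
    unfolding T_eval_def supp using w12 by (simp add: Pw1 Pw2)
  have wv: "word_val N (bconst N q v b) phi (replicate n z) = (\<lambda>k. if k = (n mod N, 0) then r ^ n * v ^ (n div N) else 0)"
    if "phi 1 (1, 0) = (\<lambda>k. if k = (1, 0) then r else 0)" for v b phi r n
    unfolding word_val_rep using that power_eval[OF N] by (simp add: z_def)
  have inId: "P \<in> taft_Id N q u a"
    unfolding taft_Id_def
  proof (intro CollectI conjI PT allI impI)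
    fix phi :: "nat \<Rightarrow> nat \<times> nat \<Rightarrow> nat \<times> nat \<Rightarrow> 'a"
    assume "\<forall>i. comod_map N q u a (phi i)"
    hence ph: "phi 1 (1, 0) = (\<lambda>k. if k = (1, 0) then phi 1 (1, 0) (1, 0) else 0)"
      using comod_char[OF N] by blast
    define r where "r = phi 1 (1, 0) (1, 0)"
    have per: "r ^ n1 = r ^ n2" unfolding n1_def n2_def C_def \<alpha>_def by (rule eventually_periodic)
    show "T_eval N (bconst N q u a) phi P = (\<lambda>_. 0)"
      unfolding eval w1_def w2_def
      using wv[where phi = phi and r = r and v = u and b = a and n = n1, OF ph[folded r_def]]
            wv[where phi = phi and r = r and v = u and b = a and n = n2, OF ph[folded r_def]]
      by (auto simp: n1d n2d per c0_def power_add mult_ac)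
  qed
  hence "P \<in> taft_Id N q u' a'" using assms(6) by simp
  hence "T_eval N (bconst N q u' a') (\<lambda>i. psi0 N) P = (\<lambda>_. 0)"
  proof -
    assume "P \<in> taft_Id N q u' a'"
    hence all: "\<forall>phi. (\<forall>i. comod_map N q u' a' (phi i)) \<longrightarrow> T_eval N (bconst N q u' a') phi P = (\<lambda>_. 0)"
      unfolding taft_Id_def by blast
    have "\<forall>i. comod_map N q u' a' ((\<lambda>i. psi0 N) i :: _ \<Rightarrow> _ \<Rightarrow> 'a)" using psi0_comod[OF N] by simp
    thus ?thesis using spec[OF all, of "\<lambda>i. psi0 N"] by simp
  qed
  hence "T_eval N (bconst N q u' a') (\<lambda>i. psi0 N) P (0, 0) = 0" by simp
  moreover have ph0: "(\<lambda>i. psi0 N) 1 (1, 0) = (\<lambda>k. if k = (1, 0) then (1::'a) else 0)"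
    using N by (auto simp: psi0_def bas_def Idx_iff)
  ultimately have "u' ^ (C * C * \<kappa> + \<kappa>) - c0 * u' ^ (C * C * \<kappa>) = 0"
    unfolding eval w1_def w2_def wv[where phi = "\<lambda>i. psi0 N" and r = 1 and v = u' and b = a' and n = n1, OF ph0]
      wv[where phi = "\<lambda>i. psi0 N" and r = 1 and v = u' and b = a' and n = n2, OF ph0] by (simp add: n1d n2d)
  moreover have "u' ^ (C * C * \<kappa>) * (u' ^ \<kappa> - u ^ \<kappa>) = u' ^ (C * C * \<kappa> + \<kappa>) - c0 * u' ^ (C * C * \<kappa>)"
    by (simp add: c0_def power_add right_diff_distrib left_diff_distrib mult.commute)
  ultimately have z0: "u' ^ (C * C * \<kappa>) * (u' ^ \<kappa> - u ^ \<kappa>) = 0" by simp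
  have "u' ^ (C * C * \<kappa>) dvd 1" using dvd_power_same[OF assms(5), of "C * C * \<kappa>"] by simp
  then obtain v where v: "1 = u' ^ (C * C * \<kappa>) * v" by (rule dvdE)
  have "u' ^ \<kappa> - u ^ \<kappa> = v * (u' ^ (C * C * \<kappa>) * (u' ^ \<kappa> - u ^ \<kappa>))"
    by (simp add: mult.assoc[symmetric] mult.commute[of v] v[symmetric])
  hence "u' ^ \<kappa> - u ^ \<kappa> = 0" using z0 by simp
  thus ?thesis by (simp add: \<kappa>_def \<alpha>_def)
qed

end
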